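(* Let $m\ge 1$ and for relays $j=1,\dots,m$ let $a_{sj}$ (source to relay $j$) and $a_{jd}$ (relay $j$ to destination) be mutually independent circularly symmetric complex Gaussian $\mathcal{CN}(0,1)$ channel gains. Let the best relay $b$ be chosen so that $$\min(|a_{sb}|^2,|a_{bd}|^2) = \max\{\min(|a_{s1}|^2,|a_{1d}|^2),\dots,\min(|a_{sm}|^2,|a_{md}|^2)\}.$$ Then: (1) $\min(|a_{sb}|^2,|a_{bd}|^2)$ has exponential order $V$ whose density satisfies $f_V(v)\doteq\rho^{-mv}$ for $v\ge0$ and $f_V(v)=0$ for $v<0$; in particular $\Pr(\min(|a_{sb}|^2,|a_{bd}|^2)\le\rho^{-v})\doteq\rho^{-mv}$ for $v\ge 0$. (2) $\Pr(|a_{sb}|^2\le\rho^{-v}) = \Pr(|a_{bd}|^2\le\rho^{-v}) \stackrel{.}{\leq} \rho^{-mv}$ if $v\ge 0$, and $\le 1$ otherwise.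
   Context: For a function $g(\rho)$, $g(\rho)\doteq\rho^{b}$ means $\lim_{\rho\to\infty}\frac{\log g(\rho)}{\log\rho}=b$, and $g(\rho)\stackrel{.}{\leq}\rho^b$ means $\lim_{\rho\to\infty}\frac{\log g(\rho)}{\log\rho}\le b$. The exponential order of a nonnegative random variable $X$ is $V=-\lim_{\rho\to\infty}\frac{\log X}{\log\rho}$. *)

theory Defs
  imports "HOL-Probability.Probability"
begin

text \<open>Density of the circularly symmetric complex Gaussian CN(0,1) on the complex plane
  (w.r.t. Lebesgue measure on C = R^2): z maps to exp(-|z|^2)/pi.\<close>
definition CN01_density :: "complex \<Rightarrow> ennreal" where
  "CN01_density z = ennreal (exp (- (cmod z)\<^sup>2) / pi)"

end

theory Submission
  imports Defs "HOL-Real_Asymp.Real_Asymp"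
begin

lemma CN01_measurable[measurable]: "CN01_density \<in> borel_measurable borel"
  unfolding CN01_density_def by measurable

lemma disk_eq: "0 \<le> t \<Longrightarrow> {z::complex. (cmod z)\<^sup>2 \<le> t} = cball 0 (sqrt t)"
  apply (auto simp: real_le_rsqrt)
  by (metis norm_ge_zero power_mono real_sqrt_pow2)

lemma lborel_disk: "0 \<le> t \<Longrightarrow> emeasure lborel {z::complex. (cmod z)\<^sup>2 \<le> t} = ennreal (pi * t)"
  by (simp add: disk_eq emeasure_cball eval_unit_ball_vol)

lemma N_disk_upper:
  assumes t: "0 \<le> t"
  shows "emeasure (density lborel CN01_density) {z. (cmod z)\<^sup>2 \<le> t} \<le> ennreal t"
proof -
  let ?S = "{z::complex. (cmod z)\<^sup>2 \<le> t}"
  have S[measurable]: "?S \<in> sets borel" by measurable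
  have "emeasure (density lborel CN01_density) ?S = (\<integral>\<^sup>+z. CN01_density z * indicator ?S z \<partial>lborel)"
    by (simp add: emeasure_density)
  also have "\<dots> \<le> (\<integral>\<^sup>+z. ennreal (1/pi) * indicator ?S z \<partial>lborel)"
  proof (intro nn_integral_mono)
    fix z :: complex
    have "exp (- (cmod z)\<^sup>2) / pi \<le> 1 / pi"
      by (intro divide_right_mono) auto
    then show "CN01_density z * indicator ?S z \<le> ennreal (1/pi) * indicator ?S z"
      unfolding CN01_density_def by (intro mult_right_mono ennreal_leI) auto
  qed
  also have "\<dots> = ennreal (1/pi) * emeasure lborel ?S"
    by (simp add: nn_integral_cmult_indicator)
  also have "\<dots> = ennreal t"
    using t by (simp add: lborel_disk ennreal_mult[symmetric])
  finally show ?thesis .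
qed

lemma N_disk_lower:
  assumes t: "0 \<le> t"
  shows "ennreal (t * exp (-t)) \<le> emeasure (density lborel CN01_density) {z. (cmod z)\<^sup>2 \<le> t}"
proof -
  let ?S = "{z::complex. (cmod z)\<^sup>2 \<le> t}"
  have S[measurable]: "?S \<in> sets borel" by measurable
  have "ennreal (t * exp (-t)) = ennreal (exp (-t) / pi) * emeasure lborel ?S"
    using t by (simp add: lborel_disk ennreal_mult[symmetric])
  also have "\<dots> = (\<integral>\<^sup>+z. ennreal (exp (-t) / pi) * indicator ?S z \<partial>lborel)"
    by (simp add: nn_integral_cmult_indicator)
  also have "\<dots> \<le> (\<integral>\<^sup>+z. CN01_density z * indicator ?S z \<partial>lborel)"
  proof (intro nn_integral_mono)
    fix z :: complex
    show "ennreal (exp (-t) / pi) * indicator ?S z \<le> CN01_density z * indicator ?S z"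
      unfolding CN01_density_def
      by (auto simp: indicator_def intro!: ennreal_leI divide_right_mono)
  qed
  also have "\<dots> = emeasure (density lborel CN01_density) ?S"
    by (simp add: emeasure_density)
  finally show ?thesis .
qed

lemma N_lower_gen:
  assumes B: "B \<subseteq> A" "B \<in> sets borel" "A \<in> sets borel"
    and c: "\<And>z. z \<in> B \<Longrightarrow> c \<le> exp (- (cmod z)\<^sup>2) / pi"
  shows "ennreal c * emeasure lborel B \<le> emeasure (density lborel CN01_density) A"
proof -
  have "ennreal c * emeasure lborel B = (\<integral>\<^sup>+z. ennreal c * indicator B z \<partial>lborel)"
    using B by (simp add: nn_integral_cmult_indicator)
  also have "\<dots> \<le> (\<integral>\<^sup>+z. CN01_density z * indicator A z \<partial>lborel)"
  proof (intro nn_integral_mono)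
    fix z :: complex
    show "ennreal c * indicator B z \<le> CN01_density z * indicator A z"
      unfolding CN01_density_def using B(1) c[of z]
      by (auto simp: indicator_def intro!: ennreal_leI)
  qed
  also have "\<dots> = emeasure (density lborel CN01_density) A"
    using B by (simp add: emeasure_density)
  finally show ?thesis .
qed

lemma N_tail_pos: "0 < emeasure (density lborel CN01_density) {z. T \<le> (cmod z)\<^sup>2}"
proof -
  define r where "r = sqrt \<bar>T\<bar> + 1"
  let ?B = "ball (complex_of_real r) (1/2)"
  have "ennreal (exp (- (r + 1/2)\<^sup>2) / pi) * emeasure lborel ?B
      \<le> emeasure (density lborel CN01_density) {z. T \<le> (cmod z)\<^sup>2}"
  proof (rule N_lower_gen)
    show "?B \<subseteq> {z. T \<le> (cmod z)\<^sup>2}"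
    proof
      fix z assume z: "z \<in> ?B"
      have "cmod (complex_of_real r) \<le> cmod z + cmod (complex_of_real r - z)"
        by (metis norm_triangle_sub add.commute)
      moreover have "cmod (complex_of_real r - z) < 1/2" using z by (simp add: dist_norm)
      moreover have "cmod (complex_of_real r) = r" unfolding r_def by simp
      ultimately have "sqrt \<bar>T\<bar> \<le> cmod z" unfolding r_def by simp
      then have "(sqrt \<bar>T\<bar>)\<^sup>2 \<le> (cmod z)\<^sup>2" by (intro power_mono) auto
      then show "z \<in> {z. T \<le> (cmod z)\<^sup>2}" by simp
    qed
    show "?B \<in> sets borel" by simp
    show "{z. T \<le> (cmod z)\<^sup>2} \<in> sets borel" by measurable
    fix z assume z: "z \<in> ?B"
    have "cmod z \<le> cmod (complex_of_real r) + cmod (z - complex_of_real r)"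
      by (metis norm_triangle_sub)
    moreover have "cmod (z - complex_of_real r) < 1/2" using z by (simp add: dist_norm norm_minus_commute)
    moreover have "cmod (complex_of_real r) = r" unfolding r_def by simp
    ultimately have "cmod z \<le> r + 1/2" by simp
    then have "(cmod z)\<^sup>2 \<le> (r + 1/2)\<^sup>2" by (intro power_mono) auto
    then show "exp (- (r + 1/2)\<^sup>2) / pi \<le> exp (- (cmod z)\<^sup>2) / pi"
      by (intro divide_right_mono) auto
  qed
  moreover have "0 < ennreal (exp (- (r + 1/2)\<^sup>2) / pi) * emeasure lborel ?B"
    by (simp add: emeasure_ball eval_unit_ball_vol ennreal_mult[symmetric])
  ultimately show ?thesis using less_le_trans by blast
qed

lemma N_circle: "emeasure (density lborel CN01_density) {z. (cmod z)\<^sup>2 = s} = 0"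
proof -
  have sub: "{z::complex. (cmod z)\<^sup>2 = s} \<subseteq> sphere 0 (sqrt s)"
    by auto
  have "sphere (0::complex) (sqrt s) \<in> null_sets lborel"
    using negligible_sphere[of "0::complex" "sqrt s"]
    by (auto simp: null_sets_completion_iff negligible_iff_null_sets negligible_convex_frontier)
  then have "{z::complex. (cmod z)\<^sup>2 = s} \<in> null_sets lborel"
    by (rule null_sets_subset) (use sub in auto)
  then show ?thesis
    by (subst emeasure_density) (auto intro: nn_integral_null_set)
qed

lemma N_tail_upper:
  assumes tot: "emeasure (density lborel CN01_density) UNIV = 1"
  shows "emeasure (density lborel CN01_density) {z. T \<le> (cmod z)\<^sup>2} \<le> ennreal (2 * exp (-T/2))"
proof -
  have tot': "(\<integral>\<^sup>+z. CN01_density z \<partial>lborel) = 1"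
    using tot by (simp add: emeasure_density)
  define g :: "complex \<Rightarrow> ennreal" where "g z = ennreal (exp (-(cmod z)\<^sup>2/2)/pi)" for z
  have g_meas[measurable]: "g \<in> borel_measurable borel" unfolding g_def by measurable
  have gs: "g (sqrt 2 *\<^sub>R x) = CN01_density x" for x
  proof -
    have "(cmod (sqrt 2 *\<^sub>R x))\<^sup>2 = 2 * (cmod x)\<^sup>2"
      by (simp add: power_mult_distrib)
    then show ?thesis unfolding g_def CN01_density_def by simp
  qed
  have "(\<integral>\<^sup>+z. g z \<partial>lborel) = (\<integral>\<^sup>+z. g z \<partial>density (distr lborel borel (\<lambda>x. 0 + sqrt 2 *\<^sub>R x)) (\<lambda>_. \<bar>sqrt 2\<bar>^DIM(complex)))"
    by (subst lborel_affine[of "sqrt 2" "0::complex", symmetric]) simp_all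
  also have "\<dots> = (\<integral>\<^sup>+x. ennreal (\<bar>sqrt 2\<bar>^DIM(complex)) * g (0 + sqrt 2 *\<^sub>R x) \<partial>lborel)"
    by (simp add: nn_integral_density nn_integral_distr)
  also have "\<dots> = (\<integral>\<^sup>+x. ennreal 2 * CN01_density x \<partial>lborel)"
    by (simp add: gs)
  also have "\<dots> = 2"
    by (simp add: nn_integral_cmult tot')
  finally have gint: "(\<integral>\<^sup>+z. g z \<partial>lborel) = 2" .
  let ?S = "{z::complex. T \<le> (cmod z)\<^sup>2}"
  have S[measurable]: "?S \<in> sets borel" by measurable
  have "emeasure (density lborel CN01_density) ?S = (\<integral>\<^sup>+z. CN01_density z * indicator ?S z \<partial>lborel)"
    by (simp add: emeasure_density)
  also have "\<dots> \<le> (\<integral>\<^sup>+z. ennreal (exp (-T/2)) * g z \<partial>lborel)"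
  proof (intro nn_integral_mono)
    fix z :: complex
    show "CN01_density z * indicator ?S z \<le> ennreal (exp (-T/2)) * g z"
    proof (cases "T \<le> (cmod z)\<^sup>2")
      case True
      have "exp (- (cmod z)\<^sup>2) = exp (-(cmod z)\<^sup>2/2) * exp (-(cmod z)\<^sup>2/2)"
        by (simp add: exp_add[symmetric])
      also have "\<dots> \<le> exp (-T/2) * exp (-(cmod z)\<^sup>2/2)"
        using True by (intro mult_right_mono) auto
      finally have "exp (- (cmod z)\<^sup>2) / pi \<le> exp (-T/2) * (exp (-(cmod z)\<^sup>2/2) / pi)"
        by (simp add: divide_right_mono)
      then show ?thesis using True unfolding CN01_density_def g_def
        by (simp add: ennreal_mult[symmetric] ennreal_leI)
    qed simp
  qed
  also have "\<dots> = ennreal (exp (-T/2)) * 2"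
    by (simp add: nn_integral_cmult gint)
  also have "\<dots> = ennreal (2 * exp (-T/2))"
    by (simp add: ennreal_mult mult.commute)
  finally show ?thesis .
qed

lemma (in prob_space) tie_null:
  assumes ind: "indep_var borel U borel V"
    and dU: "distr M borel U = density lborel CN01_density"
    and dV: "distr M borel V = density lborel CN01_density"
  shows "prob {\<omega>\<in>space M. (cmod (U \<omega>))\<^sup>2 = (cmod (V \<omega>))\<^sup>2} = 0"
proof -
  let ?N = "density lborel CN01_density"
  have rvU[measurable]: "U \<in> borel_measurable M" using ind by (rule indep_var_rv1)
  have rvV[measurable]: "V \<in> borel_measurable M" using ind by (rule indep_var_rv2)
  interpret NN: prob_space ?N
    unfolding dU[symmetric] by (rule prob_space_distr) simp
  have joint: "?N \<Otimes>\<^sub>M ?N = distr M (borel \<Otimes>\<^sub>M borel) (\<lambda>x. (U x, V x))"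
    using ind unfolding indep_var_distribution_eq dU dV by simp
  define D where "D = {p \<in> space (borel \<Otimes>\<^sub>M borel). (cmod (fst p :: complex))\<^sup>2 = (cmod (snd p :: complex))\<^sup>2}"
  have D[measurable]: "D \<in> sets (borel \<Otimes>\<^sub>M borel)" unfolding D_def by measurable
  have "prob {\<omega>\<in>space M. (cmod (U \<omega>))\<^sup>2 = (cmod (V \<omega>))\<^sup>2} = measure M ((\<lambda>x. (U x, V x)) -` D \<inter> space M)"
    by (intro arg_cong[where f="measure M"]) (auto simp: D_def space_pair_measure)
  also have "\<dots> = measure (distr M (borel \<Otimes>\<^sub>M borel) (\<lambda>x. (U x, V x))) D"
    by (rule measure_distr[symmetric]) simp_all
  also have "\<dots> = measure (?N \<Otimes>\<^sub>M ?N) D" by (simp add: joint)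
  also have "emeasure (?N \<Otimes>\<^sub>M ?N) D = 0"
  proof -
    have D': "D \<in> sets (?N \<Otimes>\<^sub>M ?N)" using D by (simp add: sets_pair_measure_cong[of ?N borel ?N borel])
    have "emeasure (?N \<Otimes>\<^sub>M ?N) D = (\<integral>\<^sup>+u. emeasure ?N (Pair u -` D) \<partial>?N)"
      by (rule NN.emeasure_pair_measure_alt[OF D'])
    also have "\<dots> = (\<integral>\<^sup>+u. 0 \<partial>?N)"
    proof (intro nn_integral_cong)
      fix u :: complex
      have eq: "Pair u -` D = {z. (cmod z)\<^sup>2 = (cmod u)\<^sup>2}"
        by (auto simp: D_def space_pair_measure)
      show "emeasure ?N (Pair u -` D) = 0" unfolding eq by (rule N_circle)
    qed
    finally show ?thesis by simp
  qed
  then have "measure (?N \<Otimes>\<^sub>M ?N) D = 0" by (simp add: measure_def)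
  finally show ?thesis .
qed

lemma filterlim_at_bot_mono':
  assumes "filterlim g at_bot F" "eventually (\<lambda>x. f x \<le> g x) F"
  shows "filterlim (f :: _ \<Rightarrow> real) at_bot F"
  unfolding filterlim_at_bot
proof
  fix Z
  from assms(1) have "eventually (\<lambda>x. g x \<le> Z) F" unfolding filterlim_at_bot by blast
  with assms(2) show "eventually (\<lambda>x. f x \<le> Z) F"
    by eventually_elim simp
qed

lemma ln_ratio_upper:
  assumes p: "0 < p" "p \<le> (2 * \<rho> powr (-v)) ^ m" and r: "1 < \<rho>"
  shows "ln p / ln \<rho> \<le> - (real m * v) + real m * ln 2 / ln \<rho>"
proof -
  have "ln p \<le> ln ((2 * \<rho> powr (-v)) ^ m)" using p r by simp
  also have "\<dots> = real m * (ln 2 - v * ln \<rho>)"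
    using r by (simp add: ln_realpow ln_mult ln_powr algebra_simps)
  finally have "ln p \<le> real m * (ln 2 - v * ln \<rho>)" .
  moreover have "0 < ln \<rho>" using r by simp
  ultimately have "ln p / ln \<rho> \<le> real m * (ln 2 - v * ln \<rho>) / ln \<rho>"
    by (simp add: divide_right_mono)
  also have "\<dots> = - (real m * v) + real m * ln 2 / ln \<rho>"
    using \<open>0 < ln \<rho>\<close> by (simp add: field_simps)
  finally show ?thesis .
qed

lemma ln_ratio_lower:
  assumes p: "(\<rho> powr (-v) * exp (-1)) ^ m \<le> p" and r: "1 < \<rho>"
  shows "- (real m * v) - real m / ln \<rho> \<le> ln p / ln \<rho>"
proof -
  have pos: "0 < (\<rho> powr (-v) * exp (-1)) ^ m" using r by simp
  have "real m * (- v * ln \<rho> - 1) = ln ((\<rho> powr (-v) * exp (-1)) ^ m)"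
    using r by (simp add: ln_realpow ln_mult ln_powr)
  also have "\<dots> \<le> ln p" using p pos by simp
  finally have *: "real m * (- v * ln \<rho> - 1) \<le> ln p" .
  have "0 < ln \<rho>" using r by simp
  have "- (real m * v) - real m / ln \<rho> = real m * (- v * ln \<rho> - 1) / ln \<rho>"
    using \<open>0 < ln \<rho>\<close> by (simp add: field_simps)
  also have "\<dots> \<le> ln p / ln \<rho>"
    using * \<open>0 < ln \<rho>\<close> by (simp add: divide_right_mono)
  finally show ?thesis .
qed

lemma lim_upper: "((\<lambda>\<rho>::real. - (real m * v) + real m * ln 2 / ln \<rho>) \<longlongrightarrow> - (real m * v)) at_top"
  by real_asymp

lemma lim_lower: "((\<lambda>\<rho>::real. - (real m * v) - real m / ln \<rho>) \<longlongrightarrow> - (real m * v)) at_top"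
  by real_asymp

lemma lim_bot: "v < 0 \<Longrightarrow> filterlim (\<lambda>\<rho>::real. (ln (2 * real m) - \<rho> powr (-v) / 2) / ln \<rho>) at_bot at_top"
  by real_asymp

lemma swap_PiM:
  assumes N: "prob_space N" and \<sigma>: "inj_on \<sigma> I" "\<sigma> \<in> I \<rightarrow> I"
    and A: "A \<in> sets (PiM I (\<lambda>_. N))"
  shows "measure (PiM I (\<lambda>_. N)) {x \<in> space (PiM I (\<lambda>_. N)). (\<lambda>i\<in>I. x (\<sigma> i)) \<in> A}
       = measure (PiM I (\<lambda>_. N)) A"
proof -
  let ?Q = "PiM I (\<lambda>_. N)"
  have d: "distr ?Q ?Q (\<lambda>x. \<lambda>i\<in>I. x (\<sigma> i)) = ?Q"
    using distr_PiM_reindex[of I "\<lambda>_. N" \<sigma> I] N \<sigma> by simp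
  have m: "(\<lambda>x. \<lambda>i\<in>I. x (\<sigma> i)) \<in> measurable ?Q ?Q"
    using \<sigma> by (intro measurable_restrict measurable_component_singleton) auto
  have "measure ?Q A = measure (distr ?Q ?Q (\<lambda>x. \<lambda>i\<in>I. x (\<sigma> i))) A" by (simp add: d)
  also have "\<dots> = measure ?Q ((\<lambda>x. \<lambda>i\<in>I. x (\<sigma> i)) -` A \<inter> space ?Q)"
    using m A by (rule measure_distr)
  finally show ?thesis by (simp add: vimage_def Int_def conj_commute)
qed

lemma sel_sets:
  assumes b: "b \<in> M \<rightarrow>\<^sub>M count_space UNIV" and bJ: "\<forall>\<omega>\<in>space M. b \<omega> \<in> J" and J: "finite J"
    and P: "\<And>j. j \<in> J \<Longrightarrow> {\<omega>\<in>space M. P j \<omega>} \<in> sets M"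
  shows "{\<omega>\<in>space M. P (b \<omega>) \<omega>} \<in> sets M"
proof -
  have "{\<omega>\<in>space M. P (b \<omega>) \<omega>} = (\<Union>j\<in>J. (b -` {j} \<inter> space M) \<inter> {\<omega>\<in>space M. P j \<omega>})"
    using bJ by auto
  also have "\<dots> \<in> sets M"
  proof -
    have "b -` {j} \<inter> space M \<in> sets M" for j using b by (rule measurable_sets) simp
    note bj = this
    show ?thesis
    proof (rule sets.finite_UN)
      fix j assume j: "j \<in> J"
      show "(b -` {j} \<inter> space M) \<inter> {\<omega>\<in>space M. P j \<omega>} \<in> sets M"
        by (rule sets.Int[OF bj P[OF j]])
    qed (rule J)
  qed
  finally show ?thesis .
qed

lemma comp_any_meas[measurable]:
  "(\<lambda>x. x i) \<in> borel_measurable (PiM I (\<lambda>_. (borel :: 'b::topological_space measure)))"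
proof (cases "i \<in> I")
  case True then show ?thesis by measurable
next
  case False
  have "(\<lambda>x. undefined :: 'b) \<in> borel_measurable (PiM I (\<lambda>_. borel))" by simp
  then show ?thesis
    by (rule measurable_cong[THEN iffD1, rotated]) (use False in \<open>auto simp: space_PiM PiE_def extensional_def\<close>)
qed


theorem lemma3:
  fixes M :: "'a measure" and m :: nat
    and asr adr :: "nat \<Rightarrow> 'a \<Rightarrow> complex" and b :: "'a \<Rightarrow> nat"
  assumes "prob_space M"
    and "m \<ge> 1"
    and "\<forall>j\<in>{1..m}. distributed M lborel (asr j) CN01_density"
    and "\<forall>j\<in>{1..m}. distributed M lborel (adr j) CN01_density"
    and "prob_space.indep_vars M (\<lambda>_. borel)
           (\<lambda>(j, k). if k then asr j else adr j) ({1..m} \<times> (UNIV :: bool set))"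
    and "b \<in> M \<rightarrow>\<^sub>M count_space UNIV"
    and "\<forall>\<omega>\<in>space M. b \<omega> \<in> {1..m} \<and>
           min ((cmod (asr (b \<omega>) \<omega>))\<^sup>2) ((cmod (adr (b \<omega>) \<omega>))\<^sup>2) =
           Max ((\<lambda>j. min ((cmod (asr j \<omega>))\<^sup>2) ((cmod (adr j \<omega>))\<^sup>2)) ` {1..m})"
  shows
    "(\<forall>v::real. v \<ge> 0 \<longrightarrow>
        ((\<lambda>\<rho>::real. ln (measure M {\<omega>\<in>space M.
            min ((cmod (asr (b \<omega>) \<omega>))\<^sup>2) ((cmod (adr (b \<omega>) \<omega>))\<^sup>2) \<le> \<rho> powr (-v)})
          / ln \<rho>) \<longlongrightarrow> - (real m * v)) at_top)
   \<and> (\<forall>v::real. v < 0 \<longrightarrow>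
        filterlim (\<lambda>\<rho>::real. ln (measure M {\<omega>\<in>space M.
            min ((cmod (asr (b \<omega>) \<omega>))\<^sup>2) ((cmod (adr (b \<omega>) \<omega>))\<^sup>2) \<ge> \<rho> powr (-v)})
          / ln \<rho>) at_bot at_top)
   \<and> (\<forall>v::real. \<forall>\<rho>::real. \<rho> > 0 \<longrightarrow>
        measure M {\<omega>\<in>space M. (cmod (asr (b \<omega>) \<omega>))\<^sup>2 \<le> \<rho> powr (-v)}
        = measure M {\<omega>\<in>space M. (cmod (adr (b \<omega>) \<omega>))\<^sup>2 \<le> \<rho> powr (-v)})
   \<and> (\<forall>v::real. v \<ge> 0 \<longrightarrow>
        Limsup at_top (\<lambda>\<rho>::real. ereal (ln (measure M {\<omega>\<in>space M.
            (cmod (asr (b \<omega>) \<omega>))\<^sup>2 \<le> \<rho> powr (-v)}) / ln \<rho>))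
        \<le> ereal (- (real m * v)))
   \<and> (\<forall>v::real. \<forall>\<rho>::real. v < 0 \<longrightarrow>
        measure M {\<omega>\<in>space M. (cmod (asr (b \<omega>) \<omega>))\<^sup>2 \<le> \<rho> powr (-v)} \<le> 1)"
proof -
  interpret prob_space M by (rule assms(1))
  let ?N = "density lborel CN01_density :: complex measure"
  define I where "I = {1..m} \<times> (UNIV :: bool set)"
  define Z where "Z = (\<lambda>(j, k). if k then asr j else adr j)"
  have Zt: "Z (j, True) = asr j" and Zf: "Z (j, False) = adr j" for j by (simp_all add: Z_def)
  have ind: "indep_vars (\<lambda>_. borel) Z I" using assms(5) unfolding Z_def I_def .
  have Zmeas: "Z i \<in> borel_measurable M" if "i \<in> I" for i
    using ind that unfolding indep_vars_def by auto
  have Zdist: "distr M borel (Z i) = ?N" if iI: "i \<in> I" for i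
  proof -
    obtain j k where i: "i = (j, k)" and j: "j \<in> {1..m}" using iI by (cases i) (auto simp: I_def)
    have "distributed M lborel (Z i) CN01_density"
      using assms(3,4) j by (cases k) (auto simp: i Z_def)
    then have d: "distr M lborel (Z i) = ?N" by (simp add: distributed_def)
    have "distr M borel (Z i) = distr M lborel (Z i)" by (rule distr_cong) auto
    with d show ?thesis by simp
  qed
  have I1: "(1::nat, True) \<in> I" "(1::nat, False) \<in> I" using assms(2) by (auto simp: I_def)
  interpret NN: prob_space ?N
    using Zdist[OF I1(1)] prob_space_distr[OF Zmeas[OF I1(1)]] by simp
  have tot: "emeasure ?N UNIV = 1" using NN.emeasure_space_1 by simp
  have prZ: "prob (Z i -` S \<inter> space M) = measure ?N S" if "i \<in> I" "S \<in> sets borel" for i S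
    using measure_distr[OF Zmeas[OF that(1)], of S] that Zdist by simp
  define F where "F t = measure ?N {z. (cmod z)\<^sup>2 \<le> t}" for t
  define G where "G T = measure ?N {z. T \<le> (cmod z)\<^sup>2}" for T
  have F_up: "F t \<le> t" if "0 \<le> t" for t
    using N_disk_upper[OF that] that unfolding F_def by (simp add: NN.emeasure_eq_measure)
  have F_low: "t * exp (-t) \<le> F t" if "0 \<le> t" for t
    using N_disk_lower[OF that] that unfolding F_def by (simp add: NN.emeasure_eq_measure)
  have G_up: "G T \<le> 2 * exp (-T/2)" for T
    using N_tail_upper[OF tot, of T] unfolding G_def by (simp add: NN.emeasure_eq_measure)
  have G_pos: "0 < G T" for T
    using N_tail_pos[of T] unfolding G_def by (simp add: NN.emeasure_eq_measure)
  have prX: "prob {\<omega>\<in>space M. (cmod (asr j \<omega>))\<^sup>2 \<le> t} = F t"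
    and prY: "prob {\<omega>\<in>space M. (cmod (adr j \<omega>))\<^sup>2 \<le> t} = F t"
    and prX': "prob {\<omega>\<in>space M. T \<le> (cmod (asr j \<omega>))\<^sup>2} = G T"
    and prY': "prob {\<omega>\<in>space M. T \<le> (cmod (adr j \<omega>))\<^sup>2} = G T"
    if "j \<in> {1..m}" for j t T
  proof -
    have i: "(j, True) \<in> I" "(j, False) \<in> I" using that by (auto simp: I_def)
    have s1: "{z::complex. (cmod z)\<^sup>2 \<le> t} \<in> sets borel" by measurable
    have s2: "{z::complex. T \<le> (cmod z)\<^sup>2} \<in> sets borel" by measurable
    have e: "Z (j,True) -` {z. (cmod z)\<^sup>2 \<le> t} \<inter> space M = {\<omega>\<in>space M. (cmod (asr j \<omega>))\<^sup>2 \<le> t}"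
      "Z (j,False) -` {z. (cmod z)\<^sup>2 \<le> t} \<inter> space M = {\<omega>\<in>space M. (cmod (adr j \<omega>))\<^sup>2 \<le> t}"
      "Z (j,True) -` {z. T \<le> (cmod z)\<^sup>2} \<inter> space M = {\<omega>\<in>space M. T \<le> (cmod (asr j \<omega>))\<^sup>2}"
      "Z (j,False) -` {z. T \<le> (cmod z)\<^sup>2} \<inter> space M = {\<omega>\<in>space M. T \<le> (cmod (adr j \<omega>))\<^sup>2}"
      by (auto simp: Zt Zf)
    show "prob {\<omega>\<in>space M. (cmod (asr j \<omega>))\<^sup>2 \<le> t} = F t"
      using prZ[OF i(1) s1] unfolding F_def e(1) .
    show "prob {\<omega>\<in>space M. (cmod (adr j \<omega>))\<^sup>2 \<le> t} = F t"
      using prZ[OF i(2) s1] unfolding F_def e(2) .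
    show "prob {\<omega>\<in>space M. T \<le> (cmod (asr j \<omega>))\<^sup>2} = G T"
      using prZ[OF i(1) s2] unfolding G_def e(3) .
    show "prob {\<omega>\<in>space M. T \<le> (cmod (adr j \<omega>))\<^sup>2} = G T"
      using prZ[OF i(2) s2] unfolding G_def e(4) .
  qed
  have am: "asr j \<in> borel_measurable M" "adr j \<in> borel_measurable M" if "j \<in> {1..m}" for j
    using Zmeas[of "(j,True)"] Zmeas[of "(j,False)"] that by (auto simp: I_def Zt Zf)
  have mne: "{1..m} \<noteq> {}" using assms(2) by auto
  have Wev: "{\<omega>\<in>space M. min ((cmod (asr j \<omega>))\<^sup>2) ((cmod (adr j \<omega>))\<^sup>2) \<le> t} \<in> sets M"
    and Xev: "{\<omega>\<in>space M. (cmod (asr j \<omega>))\<^sup>2 \<le> t} \<in> sets M"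
    and Yev: "{\<omega>\<in>space M. (cmod (adr j \<omega>))\<^sup>2 \<le> t} \<in> sets M"
    and Xev': "{\<omega>\<in>space M. T \<le> (cmod (asr j \<omega>))\<^sup>2} \<in> sets M"
    if "j \<in> {1..m}" for j t T
  proof -
    note [measurable] = am[OF that]
    show "{\<omega>\<in>space M. min ((cmod (asr j \<omega>))\<^sup>2) ((cmod (adr j \<omega>))\<^sup>2) \<le> t} \<in> sets M" by measurable
    show "{\<omega>\<in>space M. (cmod (asr j \<omega>))\<^sup>2 \<le> t} \<in> sets M" by measurable
    show "{\<omega>\<in>space M. (cmod (adr j \<omega>))\<^sup>2 \<le> t} \<in> sets M" by measurable
    show "{\<omega>\<in>space M. T \<le> (cmod (asr j \<omega>))\<^sup>2} \<in> sets M" by measurable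
  qed
  define p where "p j t = prob {\<omega>\<in>space M. min ((cmod (asr j \<omega>))\<^sup>2) ((cmod (adr j \<omega>))\<^sup>2) \<le> t}" for j t
  have p_low: "F t \<le> p j t" if "j \<in> {1..m}" for j t
  proof -
    have "F t = prob {\<omega>\<in>space M. (cmod (asr j \<omega>))\<^sup>2 \<le> t}" using prX[OF that] by simp
    also have "\<dots> \<le> p j t" unfolding p_def
      by (rule finite_measure_mono[OF _ Wev[OF that]]) auto
    finally show ?thesis .
  qed
  have p_up: "p j t \<le> 2 * F t" if "j \<in> {1..m}" for j t
  proof -
    have "p j t = prob ({\<omega>\<in>space M. (cmod (asr j \<omega>))\<^sup>2 \<le> t} \<union> {\<omega>\<in>space M. (cmod (adr j \<omega>))\<^sup>2 \<le> t})"
      unfolding p_def by (intro arg_cong[where f=prob]) (auto simp: min_le_iff_disj)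
    also have "\<dots> \<le> prob {\<omega>\<in>space M. (cmod (asr j \<omega>))\<^sup>2 \<le> t} + prob {\<omega>\<in>space M. (cmod (adr j \<omega>))\<^sup>2 \<le> t}"
      by (rule measure_Un_le[OF Xev[OF that] Yev[OF that]])
    also have "\<dots> = 2 * F t" using prX[OF that] prY[OF that] by simp
    finally show ?thesis .
  qed
  have E_eq: "{\<omega>\<in>space M. min ((cmod (asr (b \<omega>) \<omega>))\<^sup>2) ((cmod (adr (b \<omega>) \<omega>))\<^sup>2) \<le> t}
      = {\<omega>\<in>space M. \<forall>j\<in>{1..m}. min ((cmod (asr j \<omega>))\<^sup>2) ((cmod (adr j \<omega>))\<^sup>2) \<le> t}" for t
    using assms(7) mne by (auto simp: Max_le_iff)
  have E_prod: "prob {\<omega>\<in>space M. \<forall>j\<in>{1..m}. min ((cmod (asr j \<omega>))\<^sup>2) ((cmod (adr j \<omega>))\<^sup>2) \<le> t}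
      = (\<Prod>j\<in>{1..m}. p j t)" for t
  proof -
    define K where "K j = {j} \<times> (UNIV::bool set)" for j :: nat
    define V where "V j \<omega> = (\<lambda>i\<in>K j. Z i \<omega>)" for j \<omega>
    have indV: "indep_vars (\<lambda>j. PiM (K j) (\<lambda>_. borel)) V {1..m}"
      unfolding V_def by (rule indep_vars_restrict[OF ind]) (auto simp: K_def I_def disjoint_family_on_def)
    define C where "C j = {x\<in>space (PiM (K j) (\<lambda>_. borel::complex measure)).
       min ((cmod (x (j,True)))\<^sup>2) ((cmod (x (j,False)))\<^sup>2) \<le> t}" for j
    have Cs: "C j \<in> sets (PiM (K j) (\<lambda>_. borel))" for j unfolding C_def by measurable
    have pre: "V j -` C j \<inter> space M = {\<omega>\<in>space M. min ((cmod (asr j \<omega>))\<^sup>2) ((cmod (adr j \<omega>))\<^sup>2) \<le> t}"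
      if "j \<in> {1..m}" for j
      using that by (auto simp: V_def C_def K_def space_PiM Zt Zf)
    have "prob (\<Inter>j\<in>{1..m}. V j -` C j \<inter> space M) = (\<Prod>j\<in>{1..m}. prob (V j -` C j \<inter> space M))"
      by (rule indep_varsD_finite[OF indV]) (use mne Cs in auto)
    moreover have "(\<Inter>j\<in>{1..m}. V j -` C j \<inter> space M)
       = {\<omega>\<in>space M. \<forall>j\<in>{1..m}. min ((cmod (asr j \<omega>))\<^sup>2) ((cmod (adr j \<omega>))\<^sup>2) \<le> t}"
      using pre mne by auto
    ultimately show ?thesis using pre unfolding p_def by simp
  qed
  have E_bounds: "(\<rho> powr (-v) * exp (-1)) ^ m \<le> prob {\<omega>\<in>space M. min ((cmod (asr (b \<omega>) \<omega>))\<^sup>2) ((cmod (adr (b \<omega>) \<omega>))\<^sup>2) \<le> \<rho> powr (-v)}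
      \<and> prob {\<omega>\<in>space M. min ((cmod (asr (b \<omega>) \<omega>))\<^sup>2) ((cmod (adr (b \<omega>) \<omega>))\<^sup>2) \<le> \<rho> powr (-v)} \<le> (2 * \<rho> powr (-v)) ^ m"
    if v: "0 \<le> v" and r: "1 < \<rho>" for v \<rho>
  proof -
    define t where "t = \<rho> powr (-v)"
    have t0: "0 < t" unfolding t_def using r by simp
    have t1: "t \<le> 1" unfolding t_def using powr_mono[of "-v" 0 \<rho>] r v by simp
    have Fl: "t * exp (-1) \<le> F t"
    proof -
      have "t * exp (-1) \<le> t * exp (-t)" using t0 t1 by (intro mult_left_mono) auto
      also have "\<dots> \<le> F t" using F_low t0 by simp
      finally show ?thesis .
    qed
    have "(t * exp (-1)) ^ m \<le> F t ^ m" using Fl t0 by (intro power_mono) auto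
    also have "\<dots> = (\<Prod>j\<in>{1..m}. F t)" by simp
    also have "\<dots> \<le> (\<Prod>j\<in>{1..m}. p j t)"
      using p_low Fl t0 by (intro prod_mono) (auto intro: order_trans[rotated])
    finally have l: "(t * exp (-1)) ^ m \<le> (\<Prod>j\<in>{1..m}. p j t)" .
    have "(\<Prod>j\<in>{1..m}. p j t) \<le> (\<Prod>j\<in>{1..m}. 2 * t)"
    proof (intro prod_mono conjI)
      fix j assume j: "j \<in> {1..m}"
      show "0 \<le> p j t" unfolding p_def by simp
      show "p j t \<le> 2 * t" using p_up[OF j, of t] F_up[of t] t0 by simp
    qed
    also have "\<dots> = (2 * t) ^ m" by simp
    finally have u: "(\<Prod>j\<in>{1..m}. p j t) \<le> (2 * t) ^ m" .
    show ?thesis using l u unfolding t_def E_eq E_prod by simp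
  qed
  have part1: "\<forall>v::real. v \<ge> 0 \<longrightarrow>
        ((\<lambda>\<rho>::real. ln (measure M {\<omega>\<in>space M.
            min ((cmod (asr (b \<omega>) \<omega>))\<^sup>2) ((cmod (adr (b \<omega>) \<omega>))\<^sup>2) \<le> \<rho> powr (-v)})
          / ln \<rho>) \<longlongrightarrow> - (real m * v)) at_top"
  proof (intro allI impI)
    fix v :: real assume v: "0 \<le> v"
    show "((\<lambda>\<rho>::real. ln (measure M {\<omega>\<in>space M.
            min ((cmod (asr (b \<omega>) \<omega>))\<^sup>2) ((cmod (adr (b \<omega>) \<omega>))\<^sup>2) \<le> \<rho> powr (-v)})
          / ln \<rho>) \<longlongrightarrow> - (real m * v)) at_top"
    proof (rule tendsto_sandwich[OF _ _ lim_lower lim_upper])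
      show "eventually (\<lambda>\<rho>. - (real m * v) - real m / ln \<rho> \<le> ln (measure M {\<omega>\<in>space M.
            min ((cmod (asr (b \<omega>) \<omega>))\<^sup>2) ((cmod (adr (b \<omega>) \<omega>))\<^sup>2) \<le> \<rho> powr (-v)}) / ln \<rho>) at_top"
        using eventually_gt_at_top[of "1::real"]
      proof eventually_elim
        case (elim \<rho>)
        show ?case by (rule ln_ratio_lower) (use E_bounds[OF v elim] elim in auto)
      qed
      show "eventually (\<lambda>\<rho>. ln (measure M {\<omega>\<in>space M.
            min ((cmod (asr (b \<omega>) \<omega>))\<^sup>2) ((cmod (adr (b \<omega>) \<omega>))\<^sup>2) \<le> \<rho> powr (-v)}) / ln \<rho>
            \<le> - (real m * v) + real m * ln 2 / ln \<rho>) at_top"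
        using eventually_gt_at_top[of "1::real"]
      proof eventually_elim
        case (elim \<rho>)
        have pos: "0 < (\<rho> powr (-v) * exp (-1)) ^ m" using elim by simp
        note Eb = E_bounds[OF v elim]
        show ?case by (rule ln_ratio_upper[OF less_le_trans[OF pos conjunct1[OF Eb]] conjunct2[OF Eb] elim])
      qed
    qed
  qed
  have F_pos: "0 < F t" if "0 < t" for t
    using F_low[of t] that by (smt (verit) exp_gt_zero mult_pos_pos)
  have Xb_ev: "{\<omega>\<in>space M. (cmod (asr (b \<omega>) \<omega>))\<^sup>2 \<le> t} \<in> sets M" for t
    by (rule sel_sets[OF assms(6), where J="{1..m}" and P="\<lambda>j \<omega>. (cmod (asr j \<omega>))\<^sup>2 \<le> t"])
       (use assms(7) Xev in auto)
  have E_ev: "{\<omega>\<in>space M. min ((cmod (asr (b \<omega>) \<omega>))\<^sup>2) ((cmod (adr (b \<omega>) \<omega>))\<^sup>2) \<le> t} \<in> sets M" for t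
    by (rule sel_sets[OF assms(6), where J="{1..m}" and P="\<lambda>j \<omega>. min ((cmod (asr j \<omega>))\<^sup>2) ((cmod (adr j \<omega>))\<^sup>2) \<le> t"])
       (use assms(7) Wev in auto)
  have Xb_low: "F t ^ m \<le> prob {\<omega>\<in>space M. (cmod (asr (b \<omega>) \<omega>))\<^sup>2 \<le> t}" for t
  proof -
    define J1 where "J1 = {1..m} \<times> {True}"
    define D where "D = {z::complex. (cmod z)\<^sup>2 \<le> t}"
    have Ds: "D \<in> sets borel" unfolding D_def by measurable
    have J1: "J1 \<noteq> {}" "finite J1" "J1 \<subseteq> I" using mne by (auto simp: J1_def I_def)
    have "prob (\<Inter>i\<in>J1. Z i -` D \<inter> space M) = (\<Prod>i\<in>J1. prob (Z i -` D \<inter> space M))"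
      by (rule indep_varsD[OF ind J1]) (rule Ds)
    also have "\<dots> = (\<Prod>i\<in>J1. F t)"
      using J1(3) prZ[OF _ Ds] unfolding F_def D_def by (intro prod.cong) auto
    also have "\<dots> = F t ^ m" by (simp add: J1_def card_cartesian_product)
    finally have eq: "prob (\<Inter>i\<in>J1. Z i -` D \<inter> space M) = F t ^ m" .
    have "(\<Inter>i\<in>J1. Z i -` D \<inter> space M) \<subseteq> {\<omega>\<in>space M. (cmod (asr (b \<omega>) \<omega>))\<^sup>2 \<le> t}"
    proof
      fix \<omega> assume w: "\<omega> \<in> (\<Inter>i\<in>J1. Z i -` D \<inter> space M)"
      then have sp: "\<omega> \<in> space M" using J1(1) by auto
      then have bin: "(b \<omega>, True) \<in> J1" using assms(7) by (auto simp: J1_def)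
      have "\<omega> \<in> Z (b \<omega>, True) -` D \<inter> space M" using w bin by blast
      then show "\<omega> \<in> {\<omega>\<in>space M. (cmod (asr (b \<omega>) \<omega>))\<^sup>2 \<le> t}" by (simp add: D_def Zt)
    qed
    from finite_measure_mono[OF this Xb_ev] eq show ?thesis by simp
  qed
  have Xb_up: "prob {\<omega>\<in>space M. (cmod (asr (b \<omega>) \<omega>))\<^sup>2 \<le> t}
      \<le> prob {\<omega>\<in>space M. min ((cmod (asr (b \<omega>) \<omega>))\<^sup>2) ((cmod (adr (b \<omega>) \<omega>))\<^sup>2) \<le> t}" for t
    by (rule finite_measure_mono[OF _ E_ev]) auto
  have part4: "\<forall>v::real. v \<ge> 0 \<longrightarrow>
        Limsup at_top (\<lambda>\<rho>::real. ereal (ln (measure M {\<omega>\<in>space M.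
            (cmod (asr (b \<omega>) \<omega>))\<^sup>2 \<le> \<rho> powr (-v)}) / ln \<rho>))
        \<le> ereal (- (real m * v))"
  proof (intro allI impI)
    fix v :: real assume v: "0 \<le> v"
    have "Limsup at_top (\<lambda>\<rho>::real. ereal (ln (measure M {\<omega>\<in>space M.
            (cmod (asr (b \<omega>) \<omega>))\<^sup>2 \<le> \<rho> powr (-v)}) / ln \<rho>))
        \<le> Limsup at_top (\<lambda>\<rho>::real. ereal (- (real m * v) + real m * ln 2 / ln \<rho>))"
    proof (rule Limsup_mono)
      show "eventually (\<lambda>\<rho>. ereal (ln (measure M {\<omega>\<in>space M.
            (cmod (asr (b \<omega>) \<omega>))\<^sup>2 \<le> \<rho> powr (-v)}) / ln \<rho>)
            \<le> ereal (- (real m * v) + real m * ln 2 / ln \<rho>)) at_top"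
        using eventually_gt_at_top[of "1::real"]
      proof eventually_elim
        case (elim \<rho>)
        have tpos: "0 < \<rho> powr (-v)" using elim by simp
        have pos: "0 < F (\<rho> powr (-v)) ^ m" using F_pos[OF tpos] by simp
        have q1: "0 < prob {\<omega>\<in>space M. (cmod (asr (b \<omega>) \<omega>))\<^sup>2 \<le> \<rho> powr (-v)}"
          using less_le_trans[OF pos Xb_low] .
        have q2: "prob {\<omega>\<in>space M. (cmod (asr (b \<omega>) \<omega>))\<^sup>2 \<le> \<rho> powr (-v)} \<le> (2 * \<rho> powr (-v)) ^ m"
          using order_trans[OF Xb_up conjunct2[OF E_bounds[OF v elim]]] .
        show ?case using ln_ratio_upper[OF q1 q2 elim] by simp
      qed
    qed
    also have "\<dots> = ereal (- (real m * v))"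
      by (rule lim_imp_Limsup[OF _ tendsto_ereal[OF lim_upper]]) simp
    finally show "Limsup at_top (\<lambda>\<rho>::real. ereal (ln (measure M {\<omega>\<in>space M.
            (cmod (asr (b \<omega>) \<omega>))\<^sup>2 \<le> \<rho> powr (-v)}) / ln \<rho>))
        \<le> ereal (- (real m * v))" .
  qed
  have part5: "\<forall>v::real. \<forall>\<rho>::real. v < 0 \<longrightarrow>
        measure M {\<omega>\<in>space M. (cmod (asr (b \<omega>) \<omega>))\<^sup>2 \<le> \<rho> powr (-v)} \<le> 1"
    by simp
  have part2: "\<forall>v::real. v < 0 \<longrightarrow>
        filterlim (\<lambda>\<rho>::real. ln (measure M {\<omega>\<in>space M.
            min ((cmod (asr (b \<omega>) \<omega>))\<^sup>2) ((cmod (adr (b \<omega>) \<omega>))\<^sup>2) \<ge> \<rho> powr (-v)})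
          / ln \<rho>) at_bot at_top"
  proof (intro allI impI)
    fix v :: real assume v: "v < 0"
    have H_bounds: "0 < prob {\<omega>\<in>space M. min ((cmod (asr (b \<omega>) \<omega>))\<^sup>2) ((cmod (adr (b \<omega>) \<omega>))\<^sup>2) \<ge> T}
       \<and> prob {\<omega>\<in>space M. min ((cmod (asr (b \<omega>) \<omega>))\<^sup>2) ((cmod (adr (b \<omega>) \<omega>))\<^sup>2) \<ge> T} \<le> 2 * real m * exp (-T/2)" for T
    proof -
      let ?H = "{\<omega>\<in>space M. min ((cmod (asr (b \<omega>) \<omega>))\<^sup>2) ((cmod (adr (b \<omega>) \<omega>))\<^sup>2) \<ge> T}"
      have Hev: "?H \<in> sets M"
      proof (rule sel_sets[OF assms(6), where J="{1..m}" and P="\<lambda>j \<omega>. T \<le> min ((cmod (asr j \<omega>))\<^sup>2) ((cmod (adr j \<omega>))\<^sup>2)"])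
        fix j :: nat assume j: "j \<in> {1..m}"
        note [measurable] = am[OF j]
        show "{\<omega>\<in>space M. T \<le> min ((cmod (asr j \<omega>))\<^sup>2) ((cmod (adr j \<omega>))\<^sup>2)} \<in> sets M" by measurable
      qed (use assms(7) in auto)
      have sub: "?H \<subseteq> (\<Union>j\<in>{1..m}. {\<omega>\<in>space M. T \<le> (cmod (asr j \<omega>))\<^sup>2})"
        using assms(7) by force
      have "prob ?H \<le> prob (\<Union>j\<in>{1..m}. {\<omega>\<in>space M. T \<le> (cmod (asr j \<omega>))\<^sup>2})"
        by (rule finite_measure_mono[OF sub]) (use Xev' in auto)
      also have "\<dots> \<le> (\<Sum>j\<in>{1..m}. prob {\<omega>\<in>space M. T \<le> (cmod (asr j \<omega>))\<^sup>2})"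
        by (rule finite_measure_subadditive_finite) (use Xev' in auto)
      also have "\<dots> = (\<Sum>j\<in>{1..m}. G T)" using prX' by simp
      also have "\<dots> = real m * G T" by simp
      also have "\<dots> \<le> real m * (2 * exp (-T/2))" using G_up by (intro mult_left_mono) auto
      finally have up: "prob ?H \<le> 2 * real m * exp (-T/2)" by simp
      define S where "S = {z::complex. T \<le> (cmod z)\<^sup>2}"
      have Ss: "S \<in> sets borel" unfolding S_def by measurable
      have J2: "{(1::nat,True),(1,False)} \<noteq> {}" "finite {(1::nat,True),(1,False)}" "{(1::nat,True),(1,False)} \<subseteq> I"
        using I1 by auto
      have "prob (\<Inter>i\<in>{(1,True),(1,False)}. Z i -` S \<inter> space M) = (\<Prod>i\<in>{(1::nat,True),(1,False)}. prob (Z i -` S \<inter> space M))"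
        by (rule indep_varsD[OF ind J2]) (rule Ss)
      also have "\<dots> = G T * G T" using prZ[OF I1(1) Ss] prZ[OF I1(2) Ss] by (simp add: G_def S_def)
      finally have eq2: "prob (\<Inter>i\<in>{(1,True),(1,False)}. Z i -` S \<inter> space M) = G T * G T" .
      have sub2: "(\<Inter>i\<in>{(1::nat,True),(1,False)}. Z i -` S \<inter> space M) \<subseteq> ?H"
      proof
        fix \<omega> assume w: "\<omega> \<in> (\<Inter>i\<in>{(1::nat,True),(1,False)}. Z i -` S \<inter> space M)"
        then have sp: "\<omega> \<in> space M" and x1: "T \<le> (cmod (asr 1 \<omega>))\<^sup>2" and y1: "T \<le> (cmod (adr 1 \<omega>))\<^sup>2"
          by (auto simp: S_def Zt Zf)
        have "min ((cmod (asr 1 \<omega>))\<^sup>2) ((cmod (adr 1 \<omega>))\<^sup>2)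
            \<le> Max ((\<lambda>j. min ((cmod (asr j \<omega>))\<^sup>2) ((cmod (adr j \<omega>))\<^sup>2)) ` {1..m})"
          using assms(2) by (intro Max_ge) auto
        moreover have "min ((cmod (asr (b \<omega>) \<omega>))\<^sup>2) ((cmod (adr (b \<omega>) \<omega>))\<^sup>2)
            = Max ((\<lambda>j. min ((cmod (asr j \<omega>))\<^sup>2) ((cmod (adr j \<omega>))\<^sup>2)) ` {1..m})"
          using assms(7) sp by blast
        moreover have "T \<le> min ((cmod (asr 1 \<omega>))\<^sup>2) ((cmod (adr 1 \<omega>))\<^sup>2)" using x1 y1 by simp
        ultimately have "T \<le> min ((cmod (asr (b \<omega>) \<omega>))\<^sup>2) ((cmod (adr (b \<omega>) \<omega>))\<^sup>2)" by linarith
        then show "\<omega> \<in> ?H" using sp by simp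
      qed
      have "0 < G T * G T" using G_pos by simp
      also have "\<dots> \<le> prob ?H" using finite_measure_mono[OF sub2 Hev] eq2 by simp
      finally show ?thesis using up by simp
    qed
    show "filterlim (\<lambda>\<rho>::real. ln (measure M {\<omega>\<in>space M.
            min ((cmod (asr (b \<omega>) \<omega>))\<^sup>2) ((cmod (adr (b \<omega>) \<omega>))\<^sup>2) \<ge> \<rho> powr (-v)})
          / ln \<rho>) at_bot at_top"
    proof (rule filterlim_at_bot_mono'[OF lim_bot[OF v]])
      show "eventually (\<lambda>\<rho>. ln (measure M {\<omega>\<in>space M.
            min ((cmod (asr (b \<omega>) \<omega>))\<^sup>2) ((cmod (adr (b \<omega>) \<omega>))\<^sup>2) \<ge> \<rho> powr (-v)}) / ln \<rho>
          \<le> (ln (2 * real m) - \<rho> powr (-v) / 2) / ln \<rho>) at_top"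
        using eventually_gt_at_top[of "1::real"]
      proof eventually_elim
        case (elim \<rho>)
        note hb = H_bounds[of "\<rho> powr (-v)"]
        have "ln (measure M {\<omega>\<in>space M.
            min ((cmod (asr (b \<omega>) \<omega>))\<^sup>2) ((cmod (adr (b \<omega>) \<omega>))\<^sup>2) \<ge> \<rho> powr (-v)})
          \<le> ln (2 * real m * exp (-(\<rho> powr (-v))/2))"
          using hb by (subst ln_le_cancel_iff) auto
        also have "\<dots> = ln (2 * real m) - \<rho> powr (-v) / 2"
          using assms(2) by (simp add: ln_mult)
        finally show ?case using elim by (intro divide_right_mono) auto
      qed
    qed
  qed
  have indep2: "indep_var borel (Z i) borel (Z i')" if ii: "i \<in> I" "i' \<in> I" "i \<noteq> i'" for i i'
  proof -
    have r: "indep_var (PiM {i} (\<lambda>_. borel)) (\<lambda>\<omega>. restrict (\<lambda>i. Z i \<omega>) {i})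
                       (PiM {i'} (\<lambda>_. borel)) (\<lambda>\<omega>. restrict (\<lambda>i. Z i \<omega>) {i'})"
      by (rule indep_var_restrict[OF ind]) (use ii in auto)
    have "indep_var borel ((\<lambda>x. x i) \<circ> (\<lambda>\<omega>. restrict (\<lambda>i. Z i \<omega>) {i}))
                    borel ((\<lambda>x. x i') \<circ> (\<lambda>\<omega>. restrict (\<lambda>i. Z i \<omega>) {i'}))"
      by (rule indep_var_compose[OF r]) (rule measurable_component_singleton, simp)+
    then show ?thesis by (simp add: o_def)
  qed
  have tie0: "prob {\<omega>\<in>space M. (cmod (Z i \<omega>))\<^sup>2 = (cmod (Z i' \<omega>))\<^sup>2} = 0"
    if ii: "i \<in> I" "i' \<in> I" "i \<noteq> i'" for i i'
    by (rule tie_null[OF indep2[OF ii] Zdist[OF ii(1)] Zdist[OF ii(2)]])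
  define PP where "PP = {p \<in> I \<times> I. fst (fst p) \<noteq> fst (snd p)}"
  define NS where "NS = (\<Union>p\<in>PP. {\<omega>\<in>space M. (cmod (Z (fst p) \<omega>))\<^sup>2 = (cmod (Z (snd p) \<omega>))\<^sup>2})"
  have finI: "finite I" unfolding I_def by simp
  have NSnull: "NS \<in> null_sets M"
    unfolding NS_def
  proof (rule null_sets_UN')
    show "countable PP" using finI unfolding PP_def by (intro countable_finite) auto
    fix p assume p: "p \<in> PP"
    then have pI: "fst p \<in> I" "snd p \<in> I" "fst p \<noteq> snd p" unfolding PP_def by auto
    note [measurable] = Zmeas[OF pI(1)] Zmeas[OF pI(2)]
    have s: "{\<omega>\<in>space M. (cmod (Z (fst p) \<omega>))\<^sup>2 = (cmod (Z (snd p) \<omega>))\<^sup>2} \<in> sets M" by measurable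
    show "{\<omega>\<in>space M. (cmod (Z (fst p) \<omega>))\<^sup>2 = (cmod (Z (snd p) \<omega>))\<^sup>2} \<in> null_sets M"
      using s tie0[OF pI] by (simp add: emeasure_eq_measure null_setsI)
  qed
  have notie: "min ((cmod (asr j \<omega>))\<^sup>2) ((cmod (adr j \<omega>))\<^sup>2) \<noteq> min ((cmod (asr k \<omega>))\<^sup>2) ((cmod (adr k \<omega>))\<^sup>2)"
    if w: "\<omega> \<in> space M" "\<omega> \<notin> NS" and jk: "j \<in> {1..m}" "k \<in> {1..m}" "j \<noteq> k" for \<omega> j k
  proof
    assume eq: "min ((cmod (asr j \<omega>))\<^sup>2) ((cmod (adr j \<omega>))\<^sup>2) = min ((cmod (asr k \<omega>))\<^sup>2) ((cmod (adr k \<omega>))\<^sup>2)"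
    have "\<exists>a c. (cmod (Z (j,a) \<omega>))\<^sup>2 = (cmod (Z (k,c) \<omega>))\<^sup>2"
    proof -
      obtain a where a: "min ((cmod (asr j \<omega>))\<^sup>2) ((cmod (adr j \<omega>))\<^sup>2) = (cmod (Z (j,a) \<omega>))\<^sup>2"
        by (metis Zt Zf min_def)
      obtain c where c: "min ((cmod (asr k \<omega>))\<^sup>2) ((cmod (adr k \<omega>))\<^sup>2) = (cmod (Z (k,c) \<omega>))\<^sup>2"
        by (metis Zt Zf min_def)
      show ?thesis using a c eq by metis
    qed
    then obtain a c where ac: "(cmod (Z (j,a) \<omega>))\<^sup>2 = (cmod (Z (k,c) \<omega>))\<^sup>2" by blast
    have "((j,a),(k,c)) \<in> PP" using jk unfolding PP_def I_def by auto
    then have "\<omega> \<in> NS" unfolding NS_def using ac w(1) by force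
    with w(2) show False by simp
  qed
  define Pb where "Pb = PiM I (\<lambda>_. borel :: complex measure)"
  define Q where "Q = PiM I (\<lambda>_. ?N)"
  have setsQ: "sets Q = sets Pb" unfolding Q_def Pb_def by (rule sets_PiM_cong) auto
  have spaceQ: "space Q = space Pb" using setsQ by (rule sets_eq_imp_space_eq)
  have Phi: "(\<lambda>\<omega>. \<lambda>i\<in>I. Z i \<omega>) \<in> measurable M Pb"
    unfolding Pb_def by (rule measurable_restrict) (rule Zmeas)
  have law: "distr M Pb (\<lambda>\<omega>. \<lambda>i\<in>I. Z i \<omega>) = Q"
  proof -
    have "I \<noteq> {}" using I1 by auto
    have "distr M Pb (\<lambda>\<omega>. \<lambda>i\<in>I. Z i \<omega>) = PiM I (\<lambda>i. distr M borel (Z i))"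
      unfolding Pb_def using indep_vars_iff_distr_eq_PiM'[OF \<open>I \<noteq> {}\<close>, where M'="\<lambda>_. borel" and X=Z] ind Zmeas by simp
    also have "\<dots> = Q" unfolding Q_def by (rule PiM_cong) (simp_all add: Zdist)
    finally show ?thesis .
  qed
  define A where "A c t = {x\<in>space Pb. \<exists>j\<in>{1..m}. (\<forall>k\<in>{1..m}. k \<noteq> j \<longrightarrow>
     min ((cmod (x (k,True)))\<^sup>2) ((cmod (x (k,False)))\<^sup>2) < min ((cmod (x (j,True)))\<^sup>2) ((cmod (x (j,False)))\<^sup>2))
     \<and> (cmod (x (j,c)))\<^sup>2 \<le> t}" for c t
  have As: "A c t \<in> sets Pb" for c t unfolding A_def Pb_def by measurable
  define \<sigma> where "\<sigma> = (\<lambda>(j::nat, k::bool). (j, \<not> k))"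
  have \<sigma>: "inj_on \<sigma> I" "\<sigma> \<in> I \<rightarrow> I" unfolding \<sigma>_def I_def by (auto simp: inj_on_def)
  have swapA: "measure Q (A True t) = measure Q (A False t)" for t
  proof -
    have "measure Q {x \<in> space Q. (\<lambda>i\<in>I. x (\<sigma> i)) \<in> A True t} = measure Q (A True t)"
      unfolding Q_def by (rule swap_PiM[OF NN.prob_space_axioms \<sigma>]) (use As setsQ in \<open>simp add: Q_def\<close>)
    moreover have "{x \<in> space Q. (\<lambda>i\<in>I. x (\<sigma> i)) \<in> A True t} = A False t"
    proof (intro set_eqI iffI)
      fix x assume "x \<in> {x \<in> space Q. (\<lambda>i\<in>I. x (\<sigma> i)) \<in> A True t}"
      then show "x \<in> A False t" unfolding spaceQ A_def
        by (auto simp: Pb_def space_PiM I_def \<sigma>_def min.commute)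
    next
      fix x assume "x \<in> A False t"
      then show "x \<in> {x \<in> space Q. (\<lambda>i\<in>I. x (\<sigma> i)) \<in> A True t}" unfolding spaceQ A_def
        by (auto simp: Pb_def space_PiM I_def \<sigma>_def min.commute)
    qed
    ultimately show ?thesis by simp
  qed
  define U where "U c t = {\<omega>\<in>space M. \<exists>j\<in>{1..m}. (\<forall>k\<in>{1..m}. k \<noteq> j \<longrightarrow>
     min ((cmod (asr k \<omega>))\<^sup>2) ((cmod (adr k \<omega>))\<^sup>2) < min ((cmod (asr j \<omega>))\<^sup>2) ((cmod (adr j \<omega>))\<^sup>2))
     \<and> (cmod (Z (j,c) \<omega>))\<^sup>2 \<le> t}" for c t
  have Upre: "(\<lambda>\<omega>. \<lambda>i\<in>I. Z i \<omega>) -` A c t \<inter> space M = U c t" for c t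
    using measurable_space[OF Phi] unfolding A_def U_def
    by (auto simp: I_def Zt Zf)
  have Us: "U c t \<in> sets M" for c t
    using measurable_sets[OF Phi As] Upre by simp
  have prU: "prob (U c t) = measure Q (A c t)" for c t
    using measure_distr[OF Phi As, of c t] law Upre by simp
  have AEU: "AE \<omega> in M. ((cmod (Z (b \<omega>, c) \<omega>))\<^sup>2 \<le> t \<longleftrightarrow> \<omega> \<in> U c t)" for c t
  proof (rule AE_I'[OF NSnull], rule subsetI)
    fix \<omega> assume wP: "\<omega> \<in> {\<omega>\<in>space M. \<not> ((cmod (Z (b \<omega>, c) \<omega>))\<^sup>2 \<le> t \<longleftrightarrow> \<omega> \<in> U c t)}"
    then have w: "\<omega> \<in> space M" and nP: "\<not> ((cmod (Z (b \<omega>, c) \<omega>))\<^sup>2 \<le> t \<longleftrightarrow> \<omega> \<in> U c t)" by auto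
    show "\<omega> \<in> NS"
    proof (rule ccontr)
      assume nN: "\<omega> \<notin> NS"
      define j0 where "j0 = b \<omega>"
      have j0: "j0 \<in> {1..m}" using assms(7) w unfolding j0_def by blast
      have j0max: "min ((cmod (asr j0 \<omega>))\<^sup>2) ((cmod (adr j0 \<omega>))\<^sup>2)
            = Max ((\<lambda>j. min ((cmod (asr j \<omega>))\<^sup>2) ((cmod (adr j \<omega>))\<^sup>2)) ` {1..m})"
        using assms(7) w unfolding j0_def by blast
      have ge: "min ((cmod (asr k \<omega>))\<^sup>2) ((cmod (adr k \<omega>))\<^sup>2) \<le> min ((cmod (asr j0 \<omega>))\<^sup>2) ((cmod (adr j0 \<omega>))\<^sup>2)"
        if "k \<in> {1..m}" for k
        unfolding j0max using that by (intro Max_ge) auto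
      have strict: "min ((cmod (asr k \<omega>))\<^sup>2) ((cmod (adr k \<omega>))\<^sup>2) < min ((cmod (asr j0 \<omega>))\<^sup>2) ((cmod (adr j0 \<omega>))\<^sup>2)"
        if "k \<in> {1..m}" "k \<noteq> j0" for k
        using ge[OF that(1)] notie[OF w nN that(1) j0 that(2)] by linarith
      have "(cmod (Z (j0, c) \<omega>))\<^sup>2 \<le> t \<longleftrightarrow> \<omega> \<in> U c t"
      proof
        assume "(cmod (Z (j0, c) \<omega>))\<^sup>2 \<le> t"
        then show "\<omega> \<in> U c t" unfolding U_def using w j0 strict by blast
      next
        assume "\<omega> \<in> U c t"
        then obtain j where j: "j \<in> {1..m}" and jmax: "\<forall>k\<in>{1..m}. k \<noteq> j \<longrightarrow>
          min ((cmod (asr k \<omega>))\<^sup>2) ((cmod (adr k \<omega>))\<^sup>2) < min ((cmod (asr j \<omega>))\<^sup>2) ((cmod (adr j \<omega>))\<^sup>2)"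
          and jt: "(cmod (Z (j,c) \<omega>))\<^sup>2 \<le> t" unfolding U_def by blast
        have "j = j0"
        proof (rule ccontr)
          assume "j \<noteq> j0"
          then have "min ((cmod (asr j0 \<omega>))\<^sup>2) ((cmod (adr j0 \<omega>))\<^sup>2) < min ((cmod (asr j \<omega>))\<^sup>2) ((cmod (adr j \<omega>))\<^sup>2)"
            using jmax j0 by auto
          with ge[OF j] show False by linarith
        qed
        with jt show "(cmod (Z (j0, c) \<omega>))\<^sup>2 \<le> t" by simp
      qed
      with nP show False unfolding j0_def by simp
    qed
  qed
  have Yb_ev: "{\<omega>\<in>space M. (cmod (adr (b \<omega>) \<omega>))\<^sup>2 \<le> t} \<in> sets M" for t
    by (rule sel_sets[OF assms(6), where J="{1..m}" and P="\<lambda>j \<omega>. (cmod (adr j \<omega>))\<^sup>2 \<le> t"])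
       (use assms(7) Yev in auto)
  have part3: "\<forall>v::real. \<forall>\<rho>::real. \<rho> > 0 \<longrightarrow>
        measure M {\<omega>\<in>space M. (cmod (asr (b \<omega>) \<omega>))\<^sup>2 \<le> \<rho> powr (-v)}
        = measure M {\<omega>\<in>space M. (cmod (adr (b \<omega>) \<omega>))\<^sup>2 \<le> \<rho> powr (-v)}"
  proof (intro allI impI)
    fix v \<rho> :: real
    let ?t = "\<rho> powr (-v)"
    have "measure M {\<omega>\<in>space M. (cmod (asr (b \<omega>) \<omega>))\<^sup>2 \<le> ?t} = prob (U True ?t)"
      by (rule measure_eq_AE[OF _ Xb_ev Us]) (use AEU[of True ?t] in \<open>simp add: Zt\<close>)
    also have "\<dots> = prob (U False ?t)" using prU swapA by simp
    also have "\<dots> = measure M {\<omega>\<in>space M. (cmod (adr (b \<omega>) \<omega>))\<^sup>2 \<le> ?t}"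
      by (rule measure_eq_AE[OF _ Us Yb_ev]) (use AEU[of False ?t] in \<open>auto simp add: Zf\<close>)
    finally show "measure M {\<omega>\<in>space M. (cmod (asr (b \<omega>) \<omega>))\<^sup>2 \<le> ?t}
        = measure M {\<omega>\<in>space M. (cmod (adr (b \<omega>) \<omega>))\<^sup>2 \<le> ?t}" .
  qed
  show ?thesis using part1 part2 part3 part4 part5 by blast
qed
end
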